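(* Let $\mathcal K\subseteq\mathbb{Z}$ be finite and $\Omega=\bigcup_{k\in\mathcal K}(k\pi-\pi/2,\,k\pi+\pi/2)$. Then $\tan:\Omega\to\mathbb{R}$ is amenable.
   Context: Relative distance on $\mathbb{R}$: $\mathrm{dist}(x,y)=0$ if $x=y=0$, $\mathrm{dist}(x,y)=|\log(y/x)|$ if $xy>0$, and $\mathrm{dist}(x,y)=\infty$ otherwise. For a real analytic function $f$ on an open set $\Omega\subseteq\mathbb{R}$, not identically zero, the condition number is $\kappa(f,x)=0$ if $x=0$, $\kappa(f,x)=\infty$ if $x\neq0$ and $f(x)=0$, and $\kappa(f,x)=|x|\,|f'(x)|/|f(x)|$ otherwise; $\mu(f,x)=1+\kappa(f,x)$. $f:\Omega\to\mathbb{R}$ is amenable if there is $C>0$ such that for every $x\in\Omega$ with $\kappa(f,x)<\infty$, the set $B_x=\{y\in\mathbb{R}:\mathrm{dist}(y,x)<1/(C\mu(f,x))\}$ is contained in $\Omega$ and $\mu(f,y)\leq C\mu(f,x)$ for all $y\in B_x$. *)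

theory Defs
  imports "HOL-Analysis.Analysis"
begin

definition reldist :: "real \<Rightarrow> real \<Rightarrow> ereal" where
  "reldist x y = (if x = 0 \<and> y = 0 then 0
                  else if x * y > 0 then ereal \<bar>ln (y / x)\<bar>
                  else \<infinity>)"

definition cond_num :: "(real \<Rightarrow> real) \<Rightarrow> real \<Rightarrow> ereal" where
  "cond_num f x = (if x = 0 then 0
                   else if f x = 0 then \<infinity>
                   else ereal (\<bar>x\<bar> * \<bar>deriv f x\<bar> / \<bar>f x\<bar>))"

definition mu_cond :: "(real \<Rightarrow> real) \<Rightarrow> real \<Rightarrow> ereal" where
  "mu_cond f x = 1 + cond_num f x"

definition amenable :: "(real \<Rightarrow> real) \<Rightarrow> real set \<Rightarrow> bool" where
  "amenable f \<Omega> \<longleftrightarrow> (\<exists>C::real. C > 0 \<and>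
     (\<forall>x\<in>\<Omega>. cond_num f x < \<infinity> \<longrightarrow>
        (let B = {y. reldist y x < ereal 1 / (ereal C * mu_cond f x)} in
          B \<subseteq> \<Omega> \<and> (\<forall>y\<in>B. mu_cond f y \<le> ereal C * mu_cond f x))))"

end

theory Submission
  imports Defs
begin

lemma sin_lip: "\<bar>sin (w::real) - sin z\<bar> \<le> \<bar>w - z\<bar>"
proof -
  have "\<bar>sin w - sin z\<bar> = 2 * \<bar>sin ((w - z) / 2)\<bar> * \<bar>cos ((w + z) / 2)\<bar>"
    by (simp add: sin_diff_sin abs_mult)
  also have "\<dots> \<le> 2 * \<bar>(w - z) / 2\<bar> * 1"
  proof -
    have h: "\<bar>sin ((w - z) / 2)\<bar> \<le> \<bar>(w - z) / 2\<bar>" by (rule abs_sin_x_le_abs_x)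
    show ?thesis by (rule mult_mono) (use h in auto)
  qed
  finally show ?thesis by (simp add: abs_divide)
qed

lemma cos_lip: "\<bar>cos (w::real) - cos z\<bar> \<le> \<bar>w - z\<bar>"
proof -
  have "\<bar>cos w - cos z\<bar> = 2 * \<bar>sin ((w + z) / 2)\<bar> * \<bar>sin ((z - w) / 2)\<bar>"
    by (simp add: cos_diff_cos abs_mult)
  also have "\<dots> \<le> 2 * 1 * \<bar>(z - w) / 2\<bar>"
  proof -
    have h: "\<bar>sin ((z - w) / 2)\<bar> \<le> \<bar>(z - w) / 2\<bar>" by (rule abs_sin_x_le_abs_x)
    show ?thesis by (rule mult_mono) (use h in auto)
  qed
  finally show ?thesis by (simp add: abs_divide)
qed

lemma cos_nz_interval:
  fixes k :: int
  assumes "real_of_int k * pi - pi / 2 < x" "x < real_of_int k * pi + pi / 2"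
  shows "cos x \<noteq> 0"
proof
  assume "cos x = 0"
  then obtain i where i: "odd i" "x = of_int i * (pi/2)" by (auto simp: cos_zero_iff_int)
  have "real_of_int (2*k - 1) * (pi/2) < real_of_int i * (pi/2)"
    using assms i by (simp add: algebra_simps)
  hence a: "2*k - 1 < i" by (simp add: mult_less_cancel_right)
  have "real_of_int i * (pi/2) < real_of_int (2*k + 1) * (pi/2)"
    using assms i by (simp add: algebra_simps)
  hence b: "i < 2*k+1" by (simp add: mult_less_cancel_right)
  from a b have "i = 2*k" by linarith
  with i show False by simp
qed

lemma cos_bound_pt:
  fixes k :: int
  shows "cos (real_of_int k * pi + pi / 2) = 0" "cos (real_of_int k * pi - pi / 2) = 0"
proof -
  have "real_of_int k * pi + pi / 2 = of_int (2*k+1) * (pi/2)" by (simp add: algebra_simps)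
  thus "cos (real_of_int k * pi + pi / 2) = 0" by (subst cos_zero_iff_int) (intro exI[of _ "2*k+1"] conjI, auto)
  have "real_of_int k * pi - pi / 2 = of_int (2*k-1) * (pi/2)" by (simp add: algebra_simps)
  thus "cos (real_of_int k * pi - pi / 2) = 0" by (subst cos_zero_iff_int) (intro exI[of _ "2*k-1"] conjI, auto)
qed

lemma core_est:
  fixes x y s c r :: real
  assumes x0: "x \<noteq> 0" and s0: "s > 0" and c0: "c > 0" and xy: "y * x > 0"
    and r: "r = 1 / (6 * (1 + \<bar>x\<bar> / (s * c)))"
    and l: "\<bar>ln (x / y)\<bar> < r"
  shows "\<bar>y - x\<bar> < s * c / 3" "\<bar>y\<bar> \<le> 4/3 * \<bar>x\<bar>"
proof -
  have k0: "\<bar>x\<bar> / (s * c) \<ge> 0" using s0 c0 by simp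
  have r0: "r > 0" using r k0 by simp
  have t1: "6 \<le> 6 * (1 + \<bar>x\<bar> / (s * c))" using k0 by simp
  have r6: "r \<le> 1/6" unfolding r using t1 by (intro frac_le) auto
  have q0: "y / x > 0" using xy by (metis divide_pos_pos mult_pos_pos zero_less_mult_iff divide_neg_neg
        mult_neg_neg not_less_iff_gr_or_eq)
  have "ln (x / y) = - ln (y / x)" using q0 by (simp add: ln_inverse[symmetric])
  with l have l2: "\<bar>ln (y / x)\<bar> < r" by simp
  have e: "exp (ln (y / x)) = y / x" using q0 by simp
  have lo: "y / x > 1 - r"
  proof -
    have "1 + (- r) \<le> exp (- r)" by (rule exp_ge_add_one_self)
    also have "exp (-r) < exp (ln (y / x))" using l2 by simp
    finally show ?thesis using e by simp
  qed
  have hi: "y / x < 1 + 2 * r"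
  proof -
    have a: "1 - r \<le> exp (- r)" using exp_ge_add_one_self[of "-r"] by simp
    have b: "exp r * exp (-r) = 1" by (simp add: exp_minus)
    have "exp r * (1 - r) \<le> 1" using a b by (metis mult_left_mono exp_ge_zero less_imp_le exp_gt_zero)
    hence "exp r \<le> 1 / (1 - r)" using r6 by (simp add: field_simps)
    also have "\<dots> \<le> 1 + 2 * r"
    proof -
      have "r * (1 - 2 * r) \<ge> 0" using r0 r6 by (intro mult_nonneg_nonneg) auto
      hence "1 \<le> (1 + 2 * r) * (1 - r)" by (simp add: algebra_simps)
      thus ?thesis using r6 by (simp add: divide_le_eq)
    qed
    finally have "exp r \<le> 1 + 2 * r" .
    moreover have "exp (ln (y / x)) < exp r" using l2 by simp
    ultimately show ?thesis using e by simp
  qed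
  have d: "\<bar>y / x - 1\<bar> < 2 * r" using lo hi r0 by linarith
  have yx: "\<bar>y - x\<bar> = \<bar>x\<bar> * \<bar>y / x - 1\<bar>" using x0
    by (simp add: abs_mult[symmetric] algebra_simps)
  have yx2: "\<bar>y - x\<bar> < 2 * r * \<bar>x\<bar>"
    using yx d x0 by (simp add: mult.commute)
  have "2 * r * \<bar>x\<bar> = \<bar>x\<bar> * (s * c) / (3 * (s * c + \<bar>x\<bar>))"
  proof -
    have sc: "s * c > 0" using s0 c0 by simp
    have den: "s * c + \<bar>x\<bar> > 0" using sc by linarith
    have "1 + \<bar>x\<bar> / (s * c) = (s * c + \<bar>x\<bar>) / (s * c)" using s0 c0 by (simp add: add_divide_distrib)
    hence req: "r = (s * c) / (6 * (s * c + \<bar>x\<bar>))" unfolding r using sc den by (simp add: field_simps)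
    show ?thesis unfolding req using den by (simp add: field_simps)
  qed
  also have "\<dots> \<le> s * c / 3"
  proof -
    have sc: "s * c > 0" using s0 c0 by simp
    have q: "\<bar>x\<bar> / (s * c + \<bar>x\<bar>) \<le> 1" using sc by (simp add: divide_le_eq_1, linarith)
    have "\<bar>x\<bar> * (s * c) / (3 * (s * c + \<bar>x\<bar>)) = (s * c / 3) * (\<bar>x\<bar> / (s * c + \<bar>x\<bar>))"
      by simp
    also have "\<dots> \<le> (s * c / 3) * 1" using q sc by (intro mult_left_mono) auto
    finally show ?thesis by simp
  qed
  finally show "\<bar>y - x\<bar> < s * c / 3" using yx2 by simp
  have "\<bar>y\<bar> \<le> \<bar>x\<bar> + 2 * r * \<bar>x\<bar>" using yx2 by linarith
  also have "\<dots> \<le> 4/3 * \<bar>x\<bar>"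
  proof -
    have "r * \<bar>x\<bar> \<le> (1/6) * \<bar>x\<bar>" using r6 by (intro mult_right_mono) auto
    thus ?thesis by linarith
  qed
  finally show "\<bar>y\<bar> \<le> 4/3 * \<bar>x\<bar>" using r6
    by (smt (verit, best) mult_right_mono abs_ge_zero)
qed

lemma cond_tan:
  assumes "cos x \<noteq> 0" "sin x \<noteq> 0" "x \<noteq> 0"
  shows "cond_num tan x = ereal (\<bar>x\<bar> / (\<bar>sin x\<bar> * \<bar>cos x\<bar>))"
proof -
  have d: "deriv tan x = inverse ((cos x)\<^sup>2)" by (rule DERIV_imp_deriv[OF DERIV_tan[OF assms(1)]])
  have t: "tan x = sin x / cos x" by (simp add: tan_def)
  have tn: "tan x \<noteq> 0" using assms t by simp
  have "\<bar>x\<bar> * \<bar>deriv tan x\<bar> / \<bar>tan x\<bar> = \<bar>x\<bar> / (\<bar>sin x\<bar> * \<bar>cos x\<bar>)"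
    unfolding d t using assms by (simp add: abs_divide power2_eq_square abs_mult field_simps)
  thus ?thesis using assms tn by (simp add: cond_num_def)
qed

lemma step:
  fixes k :: int
  assumes a: "real_of_int k * pi - pi / 2 < x" and b: "x < real_of_int k * pi + pi / 2"
    and x0: "x \<noteq> 0" and sx: "sin x \<noteq> 0" and xy: "y * x > 0"
    and l: "\<bar>ln (x / y)\<bar> < 1 / (6 * (1 + \<bar>x\<bar> / (\<bar>sin x\<bar> * \<bar>cos x\<bar>)))"
  shows "real_of_int k * pi - pi / 2 < y" "y < real_of_int k * pi + pi / 2"
    "sin y \<noteq> 0" "cos y \<noteq> 0"
    "\<bar>y\<bar> / (\<bar>sin y\<bar> * \<bar>cos y\<bar>) \<le> 3 * (\<bar>x\<bar> / (\<bar>sin x\<bar> * \<bar>cos x\<bar>))"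
proof -
  have cx: "cos x \<noteq> 0" using a b by (rule cos_nz_interval)
  define s where "s = \<bar>sin x\<bar>"
  define c where "c = \<bar>cos x\<bar>"
  have s0: "s > 0" using sx s_def by simp
  have c0: "c > 0" using cx c_def by simp
  have e1: "\<bar>y - x\<bar> < s * c / 3" and e2: "\<bar>y\<bar> \<le> 4/3 * \<bar>x\<bar>"
    using core_est[OF x0 s0 c0 xy refl] l unfolding s_def c_def by auto
  have s1: "s \<le> 1" unfolding s_def by simp
  have c1: "c \<le> 1" unfolding c_def by simp
  have scs: "s * c \<le> s" using s0 c1 by (simp add: mult_left_le)
  have scc: "s * c \<le> c" using c0 s1 by (simp add: mult_left_le_one_le)
  have yx: "\<bar>y - x\<bar> < c / 3" "\<bar>y - x\<bar> < s / 3" using e1 scs scc s0 c0 by linarith+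
  have cb1: "c \<le> real_of_int k * pi + pi / 2 - x"
    using cos_lip[of x "real_of_int k * pi + pi / 2"] cos_bound_pt(1)[of k] b unfolding c_def by simp
  have cb2: "c \<le> x - (real_of_int k * pi - pi / 2)"
    using cos_lip[of x "real_of_int k * pi - pi / 2"] cos_bound_pt(2)[of k] a unfolding c_def by simp
  show "real_of_int k * pi - pi / 2 < y" "y < real_of_int k * pi + pi / 2"
    using yx cb1 cb2 c0 by linarith+
  have cy: "\<bar>cos y\<bar> \<ge> 2/3 * c"
    using cos_lip[of y x] yx unfolding c_def by linarith
  have sy: "\<bar>sin y\<bar> \<ge> 2/3 * s"
    using sin_lip[of y x] yx unfolding s_def by linarith
  show "sin y \<noteq> 0" "cos y \<noteq> 0" using cy sy s0 c0 by auto
  have "\<bar>y\<bar> / (\<bar>sin y\<bar> * \<bar>cos y\<bar>) \<le> (4/3 * \<bar>x\<bar>) / ((2/3 * s) * (2/3 * c))"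
    using e2 s0 c0 cy sy by (intro frac_le mult_mono) auto
  also have "\<dots> = 3 * (\<bar>x\<bar> / (s * c))" using s0 c0 by (simp add: field_simps)
  finally show "\<bar>y\<bar> / (\<bar>sin y\<bar> * \<bar>cos y\<bar>) \<le> 3 * (\<bar>x\<bar> / (\<bar>sin x\<bar> * \<bar>cos x\<bar>))"
    unfolding s_def c_def .
qed

theorem mainTheorem11:
  fixes K :: "int set"
  assumes "finite K"
  shows "amenable tan (\<Union>k\<in>K. {real_of_int k * pi - pi / 2 <..< real_of_int k * pi + pi / 2})"
  unfolding amenable_def
proof (intro exI[of _ 6] conjI ballI impI)
  let ?O = "\<Union>k\<in>K. {real_of_int k * pi - pi / 2 <..< real_of_int k * pi + pi / 2}"
  show "(6::real) > 0" by simp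
  fix x assume xO: "x \<in> ?O" and fin: "cond_num tan x < \<infinity>"
  from xO obtain k where kK: "k \<in> K" and a: "real_of_int k * pi - pi / 2 < x"
    and b: "x < real_of_int k * pi + pi / 2" by auto
  have cx: "cos x \<noteq> 0" using a b by (rule cos_nz_interval)
  show "let B = {y. reldist y x < ereal 1 / (ereal 6 * mu_cond tan x)} in
          B \<subseteq> ?O \<and> (\<forall>y\<in>B. mu_cond tan y \<le> ereal 6 * mu_cond tan x)"
  proof (cases "x = 0")
    case True
    have mu: "mu_cond tan x = 1" by (simp add: mu_cond_def cond_num_def True)
    have B: "{y. reldist y x < ereal 1 / (ereal 6 * mu_cond tan x)} = {0}"
      unfolding mu by (auto simp: reldist_def True)
    show ?thesis unfolding Let_def B using xO True mu by simp
  next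
    case False
    have sx: "sin x \<noteq> 0"
    proof
      assume "sin x = 0"
      hence "tan x = 0" by (simp add: tan_def)
      hence "cond_num tan x = \<infinity>" using False by (simp add: cond_num_def)
      with fin show False by simp
    qed
    define \<kappa> where "\<kappa> = \<bar>x\<bar> / (\<bar>sin x\<bar> * \<bar>cos x\<bar>)"
    have k0: "\<kappa> \<ge> 0" unfolding \<kappa>_def by simp
    have mu: "mu_cond tan x = ereal (1 + \<kappa>)"
      unfolding mu_cond_def cond_tan[OF cx sx False] \<kappa>_def by simp
    have thr: "ereal 1 / (ereal 6 * mu_cond tan x) = ereal (1 / (6 * (1 + \<kappa>)))"
      unfolding mu using k0 by simp
    show ?thesis unfolding Let_def thr
    proof (intro conjI subsetI ballI)
      fix y assume "y \<in> {y. reldist y x < ereal (1 / (6 * (1 + \<kappa>)))}"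
      hence r: "reldist y x < ereal (1 / (6 * (1 + \<kappa>)))" by simp
      have xy: "y * x > 0" and l: "\<bar>ln (x / y)\<bar> < 1 / (6 * (1 + \<kappa>))"
        using r False unfolding reldist_def by (auto split: if_splits)
      note st = step[OF a b False sx xy l[unfolded \<kappa>_def]]
      have y0: "y \<noteq> 0" using xy by auto
      show "y \<in> ?O" using st(1,2) kK by auto
      have "mu_cond tan y = ereal (1 + \<bar>y\<bar> / (\<bar>sin y\<bar> * \<bar>cos y\<bar>))"
        unfolding mu_cond_def cond_tan[OF st(4) st(3) y0] by simp
      also have "\<dots> \<le> ereal (6 * (1 + \<kappa>))"
        using st(5) k0 unfolding \<kappa>_def[symmetric] by simp
      also have "\<dots> = ereal 6 * mu_cond tan x" unfolding mu by simp
      finally show "mu_cond tan y \<le> ereal 6 * mu_cond tan x" .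
    qed
  qed
qed

end
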